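(* The clique number of the orthomorphism graph of $\mathbb{Z}_2\times\mathbb{Z}_4$ is $2$; that is, $\omega(\mathbb{Z}_2\times\mathbb{Z}_4)=2$.
   Context: A normalised orthomorphism of a finite group $G$ is a bijection $\theta\colon G\to G$ with $\theta(e)=e$ such that $x\mapsto x^{-1}\theta(x)$ is a bijection of $G$. Two orthomorphisms $\theta_1,\theta_2$ are orthogonal if $x\mapsto\theta_1(x)^{-1}\theta_2(x)$ is a bijection of $G$. The orthomorphism graph $\mathrm{Orth}(G)$ has the normalised orthomorphisms of $G$ as vertices, two being adjacent iff they are orthogonal; $\omega(G)$ is the largest size of a complete subgraph of $\mathrm{Orth}(G)$. *)

theory Defs
  imports "HOL-Algebra.Elementary_Groups"
begin

text \<open>Normalised orthomorphisms of a group G, taken as extensional maps on the carrier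
  (so that distinct vertices of the orthomorphism graph are distinct HOL functions).\<close>

definition normalised_orthomorphism :: "('a, 'b) monoid_scheme \<Rightarrow> ('a \<Rightarrow> 'a) \<Rightarrow> bool" where
  "normalised_orthomorphism G \<theta> \<longleftrightarrow>
     \<theta> \<in> extensional (carrier G) \<and>
     bij_betw \<theta> (carrier G) (carrier G) \<and>
     \<theta> \<one>\<^bsub>G\<^esub> = \<one>\<^bsub>G\<^esub> \<and>
     bij_betw (\<lambda>x. inv\<^bsub>G\<^esub> x \<otimes>\<^bsub>G\<^esub> \<theta> x) (carrier G) (carrier G)"

definition orthogonal_orth :: "('a, 'b) monoid_scheme \<Rightarrow> ('a \<Rightarrow> 'a) \<Rightarrow> ('a \<Rightarrow> 'a) \<Rightarrow> bool" where
  "orthogonal_orth G \<theta>1 \<theta>2 \<longleftrightarrow>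
     bij_betw (\<lambda>x. inv\<^bsub>G\<^esub> (\<theta>1 x) \<otimes>\<^bsub>G\<^esub> \<theta>2 x) (carrier G) (carrier G)"

definition orth_clique :: "('a, 'b) monoid_scheme \<Rightarrow> ('a \<Rightarrow> 'a) set \<Rightarrow> bool" where
  "orth_clique G S \<longleftrightarrow>
     S \<subseteq> {\<theta>. normalised_orthomorphism G \<theta>} \<and>
     (\<forall>\<theta>1\<in>S. \<forall>\<theta>2\<in>S. \<theta>1 \<noteq> \<theta>2 \<longrightarrow> orthogonal_orth G \<theta>1 \<theta>2)"

definition orth_clique_number :: "('a, 'b) monoid_scheme \<Rightarrow> nat" where
  "orth_clique_number G = Max (card ` {S. orth_clique G S})"

end

theory Submission imports Defs begin

type_synonym el = "int \<times> int"

definition elems :: "el list" where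
  "elems = [(0,0),(0,1),(0,2),(0,3),(1,0),(1,1),(1,2),(1,3)]"

fun mulL :: "el \<Rightarrow> el \<Rightarrow> el" where
  "mulL (a,b) (c,d) = ((a+c) mod 2, (b+d) mod 4)"
fun invL :: "el \<Rightarrow> el" where
  "invL (a,b) = ((-a) mod 2, (-b) mod 4)"
definition dL :: "el \<Rightarrow> el \<Rightarrow> el" where "dL x y = mulL (invL x) y"

definition validL :: "el list \<Rightarrow> bool" where
  "validL v \<longleftrightarrow> length v \<le> 8 \<and> set v \<subseteq> set elems \<and> distinct v \<and>
     distinct (map (\<lambda>i. dL (elems!i) (v!i)) [0..<length v]) \<and> (v \<noteq> [] \<longrightarrow> hd v = (0,0))"

definition ext1 :: "el list \<Rightarrow> el list list" where
  "ext1 p = map (\<lambda>y. p @ [y]) (filter (\<lambda>y. validL (p @ [y])) elems)"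

fun iter :: "nat \<Rightarrow> el list list" where
  "iter 0 = [[]]"
| "iter (Suc k) = concat (map ext1 (iter k))"

definition orthL :: "el list \<Rightarrow> el list \<Rightarrow> bool" where
  "orthL a b \<longleftrightarrow> distinct (map (\<lambda>i. dL (a!i) (b!i)) [0..<8])"

definition Lexp :: "el list list" where "Lexp = [[(0,0),(0,2),(1,0),(1,2),(0,1),(1,3),(1,1),(0,3)],
 [(0,0),(0,2),(1,0),(1,2),(1,3),(0,1),(0,3),(1,1)],
 [(0,0),(0,2),(1,1),(1,3),(0,1),(0,3),(1,0),(1,2)],
 [(0,0),(0,2),(1,1),(1,3),(1,2),(1,0),(0,3),(0,1)],
 [(0,0),(0,2),(1,2),(1,0),(0,3),(1,3),(1,1),(0,1)],
 [(0,0),(0,2),(1,2),(1,0),(1,3),(0,3),(0,1),(1,1)],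
 [(0,0),(0,2),(1,3),(1,1),(0,3),(0,1),(1,0),(1,2)],
 [(0,0),(0,2),(1,3),(1,1),(1,2),(1,0),(0,1),(0,3)],
 [(0,0),(0,3),(1,0),(1,3),(0,1),(1,2),(1,1),(0,2)],
 [(0,0),(0,3),(1,0),(1,3),(1,1),(0,2),(0,1),(1,2)],
 [(0,0),(0,3),(1,1),(1,0),(0,2),(0,1),(1,3),(1,2)],
 [(0,0),(0,3),(1,1),(1,0),(1,3),(1,2),(0,2),(0,1)],
 [(0,0),(0,3),(1,2),(1,1),(0,1),(1,0),(1,3),(0,2)],
 [(0,0),(0,3),(1,2),(1,1),(1,3),(0,2),(0,1),(1,0)],
 [(0,0),(0,3),(1,3),(1,2),(0,2),(0,1),(1,1),(1,0)],
 [(0,0),(0,3),(1,3),(1,2),(1,1),(1,0),(0,2),(0,1)],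
 [(0,0),(1,0),(0,1),(1,1),(1,2),(0,2),(1,3),(0,3)],
 [(0,0),(1,0),(0,1),(1,3),(0,2),(1,2),(0,3),(1,1)],
 [(0,0),(1,0),(0,3),(1,1),(0,1),(1,3),(0,2),(1,2)],
 [(0,0),(1,0),(0,3),(1,3),(1,2),(0,2),(1,1),(0,1)],
 [(0,0),(1,0),(1,2),(0,2),(0,1),(0,3),(1,3),(1,1)],
 [(0,0),(1,0),(1,2),(0,2),(1,1),(1,3),(0,3),(0,1)],
 [(0,0),(1,0),(1,3),(0,1),(0,2),(1,2),(1,1),(0,3)],
 [(0,0),(1,0),(1,3),(0,1),(1,1),(0,3),(0,2),(1,2)],
 [(0,0),(1,1),(0,1),(1,0),(1,2),(0,3),(1,3),(0,2)],
 [(0,0),(1,1),(0,1),(1,2),(0,2),(1,3),(0,3),(1,0)],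
 [(0,0),(1,1),(0,3),(1,0),(0,2),(1,3),(0,1),(1,2)],
 [(0,0),(1,1),(0,3),(1,2),(1,3),(0,2),(1,0),(0,1)],
 [(0,0),(1,1),(1,0),(0,1),(0,3),(0,2),(1,3),(1,2)],
 [(0,0),(1,1),(1,0),(0,1),(1,3),(1,2),(0,3),(0,2)],
 [(0,0),(1,1),(1,3),(0,2),(0,3),(1,2),(1,0),(0,1)],
 [(0,0),(1,1),(1,3),(0,2),(1,2),(0,3),(0,1),(1,0)],
 [(0,0),(1,2),(0,1),(1,1),(0,3),(1,3),(0,2),(1,0)],
 [(0,0),(1,2),(0,1),(1,3),(1,1),(0,3),(1,0),(0,2)],
 [(0,0),(1,2),(0,3),(1,1),(1,3),(0,1),(1,0),(0,2)],
 [(0,0),(1,2),(0,3),(1,3),(0,2),(1,0),(0,1),(1,1)],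
 [(0,0),(1,2),(1,0),(0,2),(0,3),(0,1),(1,3),(1,1)],
 [(0,0),(1,2),(1,0),(0,2),(1,1),(1,3),(0,1),(0,3)],
 [(0,0),(1,2),(1,1),(0,1),(0,2),(1,0),(1,3),(0,3)],
 [(0,0),(1,2),(1,1),(0,1),(1,3),(0,3),(0,2),(1,0)],
 [(0,0),(1,3),(0,1),(1,0),(0,3),(1,2),(0,2),(1,1)],
 [(0,0),(1,3),(0,1),(1,2),(1,1),(0,2),(1,0),(0,3)],
 [(0,0),(1,3),(0,3),(1,0),(1,2),(0,1),(1,1),(0,2)],
 [(0,0),(1,3),(0,3),(1,2),(0,1),(1,0),(0,2),(1,1)],
 [(0,0),(1,3),(1,1),(0,2),(0,1),(1,2),(1,0),(0,3)],
 [(0,0),(1,3),(1,1),(0,2),(1,2),(0,1),(0,3),(1,0)],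
 [(0,0),(1,3),(1,2),(0,1),(0,3),(0,2),(1,1),(1,0)],
 [(0,0),(1,3),(1,2),(0,1),(1,1),(1,0),(0,3),(0,2)]]"

lemma iter8: "iter 8 = Lexp"
  by code_simp

lemma no_tri: "\<forall>a\<in>set Lexp. \<forall>b\<in>set (filter (orthL a) Lexp). \<forall>c\<in>set (filter (orthL a) Lexp).
   b \<noteq> c \<longrightarrow> a = b \<or> a = c \<or> \<not> orthL b c"
  by code_simp


abbreviation "GG \<equiv> integer_mod_group 2 \<times>\<times> integer_mod_group 4"

lemma carrier_GG: "carrier GG = set elems"
proof -
  have a: "{0..<2::int} = {0,1}" by auto
  have b: "{0..<4::int} = {0,1,2,3}" by auto
  show ?thesis by (auto simp: carrier_integer_mod_group elems_def a b)
qed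

lemma group_GG: "group GG"
  by (simp add: DirProd_group)

lemma mult_GG: "x \<in> carrier GG \<Longrightarrow> y \<in> carrier GG \<Longrightarrow> x \<otimes>\<^bsub>GG\<^esub> y = mulL x y"
  by (cases x; cases y) simp

lemma inv_GG: "x \<in> carrier GG \<Longrightarrow> inv\<^bsub>GG\<^esub> x = invL x"
  by (cases x) (simp add: inv_DirProd)

lemma dL_GG: "x \<in> carrier GG \<Longrightarrow> y \<in> carrier GG \<Longrightarrow> inv\<^bsub>GG\<^esub> x \<otimes>\<^bsub>GG\<^esub> y = dL x y"
proof -
  assume x: "x \<in> carrier GG" and y: "y \<in> carrier GG"
  have "inv\<^bsub>GG\<^esub> x \<in> carrier GG" using x by (rule group.inv_closed[OF group_GG])
  then have "inv\<^bsub>GG\<^esub> x \<otimes>\<^bsub>GG\<^esub> y = mulL (inv\<^bsub>GG\<^esub> x) y" using y by (rule mult_GG)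
  then show ?thesis using x by (simp only: inv_GG dL_def)
qed

declare carrier_DirProd[simp del]

lemma one_GG: "\<one>\<^bsub>GG\<^esub> = (0,0)" by simp

lemma length_elems: "length elems = 8" by (simp add: elems_def)
lemma distinct_elems: "distinct elems" by (simp add: elems_def)
lemma hd_elems: "hd elems = (0,0)" by (simp add: elems_def)

lemma bij_list:
  assumes "distinct xs"
  shows "bij_betw f (set xs) (set xs) \<longleftrightarrow> distinct (map f xs) \<and> f ` set xs \<subseteq> set xs"
proof
  assume "bij_betw f (set xs) (set xs)"
  then show "distinct (map f xs) \<and> f ` set xs \<subseteq> set xs"
    using assms by (auto simp: bij_betw_def distinct_map)
next
  assume h: "distinct (map f xs) \<and> f ` set xs \<subseteq> set xs"
  then have inj: "inj_on f (set xs)" by (simp add: distinct_map)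
  have "card (f ` set xs) = card (set xs)" using card_image[OF inj] .
  then have "f ` set xs = set xs" using h by (meson card_subset_eq finite_set)
  then show "bij_betw f (set xs) (set xs)" using inj by (simp add: bij_betw_def)
qed

lemma map_idx: "map (\<lambda>i. g (xs ! i)) [0..<length xs] = map g xs"
proof -
  have "map (\<lambda>i. g (xs ! i)) [0..<length xs] = map g (map (\<lambda>i. xs ! i) [0..<length xs])"
    by (simp only: map_map comp_def)
  also have "\<dots> = map g xs" by (simp only: map_nth)
  finally show ?thesis .
qed

lemma validL_snoc: "validL (p @ [y]) \<Longrightarrow> validL p"
proof -
  assume h: "validL (p @ [y])"
  have eq: "map (\<lambda>i. dL (elems!i) ((p@[y])!i)) [0..<length (p@[y])] =
    map (\<lambda>i. dL (elems!i) (p!i)) [0..<length p] @ [dL (elems ! length p) y]"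
    by (simp add: nth_append)
  show "validL p" using h unfolding validL_def eq
    by (cases p) auto
qed

lemma valid_in_iter: "validL v \<Longrightarrow> v \<in> set (iter (length v))"
proof (induction v rule: rev_induct)
  case Nil then show ?case by simp
next
  case (snoc y p)
  have vp: "validL p" using validL_snoc snoc.prems .
  have "p \<in> set (iter (length p))" using snoc.IH vp .
  moreover have "y \<in> set elems" using snoc.prems by (simp add: validL_def)
  ultimately show ?case using snoc.prems by (force simp: ext1_def)
qed

lemma norm_valid:
  assumes "normalised_orthomorphism GG \<theta>"
  shows "map \<theta> elems \<in> set Lexp"
proof -
  from assms have b1: "bij_betw \<theta> (set elems) (set elems)" and o: "\<theta> (0,0) = (0,0)"
    and b2: "bij_betw (\<lambda>x. inv\<^bsub>GG\<^esub> x \<otimes>\<^bsub>GG\<^esub> \<theta> x) (set elems) (set elems)"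
    by (auto simp: normalised_orthomorphism_def carrier_GG)
  have cl: "\<theta> x \<in> set elems" if "x \<in> set elems" for x
    using b1 that by (auto simp: bij_betw_def)
  have b2': "bij_betw (\<lambda>x. dL x (\<theta> x)) (set elems) (set elems)"
    using b2 by (rule bij_betw_cong[THEN iffD1, rotated]) (simp add: dL_GG carrier_GG cl)
  let ?v = "map \<theta> elems"
  have d1: "distinct ?v" using b1 distinct_elems bij_list by blast
  have d2: "distinct (map (\<lambda>x. dL x (\<theta> x)) elems)" using b2' distinct_elems bij_list by blast
  have e: "map (\<lambda>i. dL (elems!i) (?v!i)) [0..<length ?v] = map (\<lambda>x. dL x (\<theta> x)) elems"
  proof -
    have "map (\<lambda>i. dL (elems!i) (?v!i)) [0..<length ?v] = map (\<lambda>i. dL (elems!i) (\<theta> (elems!i))) [0..<length elems]"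
      by (intro map_cong) auto
    then show ?thesis using map_idx[of "\<lambda>x. dL x (\<theta> x)" elems] by simp
  qed
  have "validL ?v" unfolding validL_def e
    using d1 d2 cl o by (auto simp: length_elems hd_map hd_elems)
  then have "?v \<in> set (iter 8)" using valid_in_iter length_elems by fastforce
  then show ?thesis by (simp add: iter8)
qed

lemma orth_orthL:
  assumes "orthogonal_orth GG \<theta>1 \<theta>2" "normalised_orthomorphism GG \<theta>1" "normalised_orthomorphism GG \<theta>2"
  shows "orthL (map \<theta>1 elems) (map \<theta>2 elems)"
proof -
  have cl: "\<theta> x \<in> set elems" if "normalised_orthomorphism GG \<theta>" "x \<in> set elems" for x \<theta>
    using that by (auto simp: bij_betw_def normalised_orthomorphism_def carrier_GG)
  from assms(1) have b: "bij_betw (\<lambda>x. inv\<^bsub>GG\<^esub> (\<theta>1 x) \<otimes>\<^bsub>GG\<^esub> \<theta>2 x) (set elems) (set elems)"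
    by (simp add: orthogonal_orth_def carrier_GG)
  have b': "bij_betw (\<lambda>x. dL (\<theta>1 x) (\<theta>2 x)) (set elems) (set elems)"
    using b by (rule bij_betw_cong[THEN iffD1, rotated]) (simp add: dL_GG carrier_GG cl assms)
  have d: "distinct (map (\<lambda>x. dL (\<theta>1 x) (\<theta>2 x)) elems)" using b' distinct_elems bij_list by blast
  have e: "map (\<lambda>i. dL (map \<theta>1 elems ! i) (map \<theta>2 elems ! i)) [0..<8] = map (\<lambda>x. dL (\<theta>1 x) (\<theta>2 x)) elems"
  proof -
    have "map (\<lambda>i. dL (map \<theta>1 elems ! i) (map \<theta>2 elems ! i)) [0..<8] = map (\<lambda>i. dL (\<theta>1 (elems!i)) (\<theta>2 (elems!i))) [0..<length elems]"
      by (intro map_cong) (auto simp: length_elems)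
    then show ?thesis using map_idx[of "\<lambda>x. dL (\<theta>1 x) (\<theta>2 x)" elems] by simp
  qed
  show ?thesis unfolding orthL_def e using d .
qed

lemma map_inj:
  assumes "normalised_orthomorphism GG \<theta>1" "normalised_orthomorphism GG \<theta>2"
    "map \<theta>1 elems = map \<theta>2 elems"
  shows "\<theta>1 = \<theta>2"
proof -
  have e1: "\<theta>1 \<in> extensional (carrier GG)" using assms(1) unfolding normalised_orthomorphism_def by blast
  have e2: "\<theta>2 \<in> extensional (carrier GG)" using assms(2) unfolding normalised_orthomorphism_def by blast
  have "\<forall>x\<in>set elems. \<theta>1 x = \<theta>2 x" using assms(3) by (simp only: map_eq_conv)
  then have "\<forall>x\<in>carrier GG. \<theta>1 x = \<theta>2 x" by (simp only: carrier_GG)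
  then show ?thesis using e1 e2 by (intro extensionalityI[of _ "carrier GG"]) auto
qed

lemma set_elems: "set elems = {0,1} \<times> {0,1,2,3}" by (auto simp: elems_def)

lemma dL_in: "dL x y \<in> set elems"
proof -
  have a: "u mod 2 \<in> {0,1}" for u :: int by auto
  have b: "u mod 4 \<in> {0,1,2,3}" for u :: int by auto
  show ?thesis by (cases x; cases y) (simp only: set_elems dL_def invL.simps mulL.simps mem_Times_iff fst_conv snd_conv a b)
qed

definition th1 :: "el \<Rightarrow> el" where
  "th1 = restrict (\<lambda>x. the (map_of (zip elems [(0,0),(0,2),(1,0),(1,2),(0,1),(1,3),(1,1),(0,3)]) x)) (set elems)"
definition th2 :: "el \<Rightarrow> el" where
  "th2 = restrict (\<lambda>x. the (map_of (zip elems [(0,0),(0,3),(1,2),(1,1),(1,3),(0,2),(0,1),(1,0)]) x)) (set elems)"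

lemma th_vals:
  "map th1 elems = [(0,0),(0,2),(1,0),(1,2),(0,1),(1,3),(1,1),(0,3)]"
  "map th2 elems = [(0,0),(0,3),(1,2),(1,1),(1,3),(0,2),(0,1),(1,0)]"
  by (simp_all add: th1_def th2_def elems_def)

lemma th_norm_aux:
  assumes "th \<in> extensional (set elems)" "set (map th elems) \<subseteq> set elems"
    "distinct (map th elems)" "th (0,0) = (0,0)"
    "distinct (map (\<lambda>x. dL x (th x)) elems)"
  shows "normalised_orthomorphism GG th"
proof -
  have cl: "th x \<in> set elems" if "x \<in> set elems" for x using assms(2) that by auto
  have "bij_betw (\<lambda>x. dL x (th x)) (set elems) (set elems)"
    using assms(5) assms(2) by (subst bij_list[OF distinct_elems]) (auto simp: dL_in)
  then have "bij_betw (\<lambda>x. inv\<^bsub>GG\<^esub> x \<otimes>\<^bsub>GG\<^esub> th x) (set elems) (set elems)"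
    by (rule bij_betw_cong[THEN iffD1, rotated]) (simp add: dL_GG carrier_GG cl)
  moreover have "bij_betw th (set elems) (set elems)"
    using assms(2,3) by (subst bij_list[OF distinct_elems]) auto
  ultimately show ?thesis using assms(1,4)
    by (simp add: normalised_orthomorphism_def carrier_GG)
qed

lemma th_norm: "normalised_orthomorphism GG th1" "normalised_orthomorphism GG th2"
proof -
  show "normalised_orthomorphism GG th1"
    by (rule th_norm_aux) (simp_all only: th_vals, simp_all add: th1_def elems_def dL_def)
  show "normalised_orthomorphism GG th2"
    by (rule th_norm_aux) (simp_all only: th_vals, simp_all add: th2_def elems_def dL_def)
qed

lemma orth_aux:
  assumes "normalised_orthomorphism GG a" "normalised_orthomorphism GG b"
    "distinct (map (\<lambda>x. dL (a x) (b x)) elems)"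
  shows "orthogonal_orth GG a b"
proof -
  have cl: "\<theta> x \<in> set elems" if "normalised_orthomorphism GG \<theta>" "x \<in> set elems" for x \<theta>
    using that by (auto simp: bij_betw_def normalised_orthomorphism_def carrier_GG)
  have "bij_betw (\<lambda>x. dL (a x) (b x)) (set elems) (set elems)"
    using assms(3) by (subst bij_list[OF distinct_elems]) (auto simp: dL_in)
  then have "bij_betw (\<lambda>x. inv\<^bsub>GG\<^esub> (a x) \<otimes>\<^bsub>GG\<^esub> b x) (set elems) (set elems)"
    by (rule bij_betw_cong[THEN iffD1, rotated]) (simp add: dL_GG carrier_GG cl assms)
  then show ?thesis by (simp add: orthogonal_orth_def carrier_GG)
qed

lemma th_orth: "orthogonal_orth GG th1 th2" "orthogonal_orth GG th2 th1"
   apply (rule orth_aux[OF th_norm])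
   apply (simp add: th1_def th2_def elems_def dL_def)
  apply (rule orth_aux[OF th_norm(2) th_norm(1)])
  apply (simp add: th1_def th2_def elems_def dL_def)
  done

lemma th_neq: "th1 \<noteq> th2"
proof
  assume "th1 = th2"
  then have "map th1 elems = map th2 elems" by simp
  then show False by (simp add: th_vals)
qed

theorem corollary3:
  shows "orth_clique_number (integer_mod_group 2 \<times>\<times> integer_mod_group 4) = 2"
proof -
  let ?N = "{\<theta>. normalised_orthomorphism GG \<theta>}"
  have finN: "finite ?N"
  proof -
    have "inj_on (\<lambda>\<theta>. map \<theta> elems) ?N" by (auto intro: inj_onI map_inj)
    moreover have "(\<lambda>\<theta>. map \<theta> elems) ` ?N \<subseteq> set Lexp" using norm_valid by auto
    ultimately show ?thesis by (meson finite_imageD finite_set finite_subset)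
  qed
  let ?C = "{S. orth_clique GG S}"
  have finC: "finite ?C"
    by (rule finite_subset[of _ "Pow ?N"]) (auto simp: orth_clique_def finN)
  have le2: "card S \<le> 2" if cS: "orth_clique GG S" for S
  proof (rule ccontr)
    assume "\<not> card S \<le> 2"
    then have "3 \<le> card S" by simp
    then obtain T where "T \<subseteq> S" "card T = 3" by (meson obtain_subset_with_card_n)
    then obtain a b c where abc: "a \<in> S" "b \<in> S" "c \<in> S" "a \<noteq> b" "b \<noteq> c" "a \<noteq> c"
      by (auto simp: card_3_iff)
    have n: "normalised_orthomorphism GG x" if "x \<in> S" for x
      using cS that by (auto simp: orth_clique_def)
    have o: "orthogonal_orth GG x y" if "x \<in> S" "y \<in> S" "x \<noteq> y" for x y
      using cS that by (auto simp: orth_clique_def)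
    have ne: "map x elems \<noteq> map y elems" if "x \<in> S" "y \<in> S" "x \<noteq> y" for x y
      using map_inj n that by blast
    have oL: "orthL (map x elems) (map y elems)" if "x \<in> S" "y \<in> S" "x \<noteq> y" for x y
      using orth_orthL o n that by blast
    have L: "map x elems \<in> set Lexp" if "x \<in> S" for x using norm_valid n that by blast
    from no_tri have "\<forall>b\<in>set (filter (orthL (map a elems)) Lexp). \<forall>c\<in>set (filter (orthL (map a elems)) Lexp).
      b \<noteq> c \<longrightarrow> map a elems = b \<or> map a elems = c \<or> \<not> orthL b c"
      using L abc(1) by blast
    then have "map b elems \<noteq> map c elems \<longrightarrow> map a elems = map b elems \<or> map a elems = map c elems \<or> \<not> orthL (map b elems) (map c elems)"
      using L[OF abc(2)] L[OF abc(3)] oL[OF abc(1,2,4)] oL[OF abc(1,3,6)] by (simp only: set_filter mem_Collect_eq Ball_def) blast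
    then show False using ne[OF abc(2,3,5)] ne[OF abc(1,2,4)] ne[OF abc(1,3,6)] oL[OF abc(2,3,5)] by blast
  qed
  have th12: "{th1, th2} \<in> ?C"
    using th_norm th_orth by (auto simp: orth_clique_def)
  have c2: "card {th1, th2} = 2" using th_neq by simp
  show ?thesis unfolding orth_clique_number_def
    by (rule Max_eqI) (use finC le2 th12 c2 in \<open>auto intro!: image_eqI\<close>)
qed

end
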